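(* For every $n$ with $2\le n\le\infty$, the single identity $xyx\approx yx^2$ is a finite identity basis for the stalactic monoid $\mathrm{stal}_n$ and for the taiga monoid $\mathrm{taig}_n$. Consequently, all stalactic and taiga monoids of rank at least $2$ (including rank $\infty$) are equationally equivalent, i.e. satisfy exactly the same identities.
   Context: Let $\mathcal{A}=\{1<2<3<\cdots\}$ and $\mathcal{A}_n=\{1<\cdots<n\}$; write $\mathcal{A}_\infty=\mathcal{A}$. A stalactic tableau is a finite array of symbols of $\mathcal{A}$ whose columns are top-aligned and in which two symbols lie in the same column iff they are equal. Inserting $a$ into a stalactic tableau $T$: if $a$ does not appear in $T$, add $a$ as a new column at the left end of the top row; otherwise append $a$ at the bottom of the column containing $a$. A binary search tree with multiplicities is a binary tree with pairwise distinct labels from $\mathcal{A}$ (each label greater than all labels in its left subtree and less than all labels in its right subtree) with a positive integer multiplicity attached to each node. Inserting $a$ into such a tree $T$: if $T$ is empty, create a node labelled $a$ with multiplicity $1$; otherwise, with root label $x$, recursively insert into the left subtree if $a<x$, into the right subtree if $a>x$, and increase the multiplicity of the root by $1$ if $a=x$. For a word $w=w_1\cdots w_k\in\mathcal{A}^*$, $\mathrm{P}_{\mathrm{stal}}(w)$ (resp. $\mathrm{P}_{\mathrm{taig}}(w)$) is obtained from the empty tableau (resp. empty tree) by inserting $w_k,w_{k-1},\dots,w_1$ in this order (reading $w$ right to left). The relation $u\equiv v \iff \mathrm{P}(u)=\mathrm{P}(v)$ is a congruence on $\mathcal{A}^*$; $\mathrm{stal}_n$ (resp. $\mathrm{taig}_n$)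 is the quotient monoid $\mathcal{A}_n^*/{\equiv}$ for the stalactic (resp. taiga) insertion, $2\le n\le\infty$. Identities: $\mathcal{X}$ is a countably infinite alphabet; an identity is $\mathbf{u}\approx\mathbf{v}$ with $\mathbf{u},\mathbf{v}\in\mathcal{X}^*$; a monoid $S$ satisfies it if $\varphi(\mathbf{u})=\varphi(\mathbf{v})$ for all maps $\varphi:\mathcal{X}\to S$ (extended to monoid homomorphisms). $\mathbf{u}\approx\mathbf{v}$ is derived from a set $\Sigma$ if there is a sequence $\mathbf{u}=\mathbf{u}_1,\dots,\mathbf{u}_n=\mathbf{v}$ with $\mathbf{u}_i=\mathbf{a}\varphi(\mathbf{p})\mathbf{b}$, $\mathbf{u}_{i+1}=\mathbf{a}\varphi(\mathbf{q})\mathbf{b}$ for some words $\mathbf{a},\mathbf{b}$, an endomorphism $\varphi$ of $\mathcal{X}^*$, and $\mathbf{p}\approx\mathbf{q}\in\Sigma$. A finite identity basis for $S$ is a finite set $\Sigma$ of identities satisfied by $S$ from which every identity satisfied by $S$ is derived. *)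

theory Defs
  imports Main "HOL-Library.Extended_Nat"
begin

text \<open>The alphabet A_n = {1 < ... < n} of rank n, with n = \<infinity> giving A = {1 < 2 < ...}.\<close>
definition alph :: "enat \<Rightarrow> nat set" where
  "alph n = {a. 1 \<le> a \<and> enat a \<le> n}"

text \<open>A stalactic tableau is represented as the list of its columns, read left to right
  along the top row; each column is the list of its (equal) entries from top to bottom.\<close>
type_synonym stal_tableau = "nat list list"

definition stal_ins :: "nat \<Rightarrow> stal_tableau \<Rightarrow> stal_tableau" where
  "stal_ins a T =
     (if a \<in> set (concat T) then map (\<lambda>c. if a \<in> set c then c @ [a] else c) T
      else [a] # T)"

text \<open>Right-to-left insertion: w_k is inserted first, w_1 last.\<close>
definition P_stal :: "nat list \<Rightarrow> stal_tableau" where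
  "P_stal w = foldr stal_ins w []"

datatype bstm = Leaf | Node bstm nat nat bstm
  (* Node left label multiplicity right *)

fun taig_ins :: "nat \<Rightarrow> bstm \<Rightarrow> bstm" where
  "taig_ins a Leaf = Node Leaf a 1 Leaf"
| "taig_ins a (Node l x m r) =
     (if a < x then Node (taig_ins a l) x m r
      else if a > x then Node l x m (taig_ins a r)
      else Node l x (Suc m) r)"

definition P_taig :: "nat list \<Rightarrow> bstm" where
  "P_taig w = foldr taig_ins w Leaf"

text \<open>Variables of the countably infinite alphabet X are natural numbers; an identity
  u \<approx> v is a pair of words over X.\<close>
type_synonym identity = "nat list \<times> nat list"

definition subst :: "(nat \<Rightarrow> 'b list) \<Rightarrow> nat list \<Rightarrow> 'b list" where
  "subst \<phi> u = concat (map \<phi> u)"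

text \<open>Satisfaction of an identity in the monoid A_n^*/\<equiv>_P, where u \<equiv>_P v iff P u = P v.
  Since the quotient map A_n^* \<rightarrow> A_n^*/\<equiv>_P is a surjective monoid morphism, every map
  X \<rightarrow> A_n^*/\<equiv>_P factors through a map X \<rightarrow> A_n^*, so satisfaction is expressed by
  quantifying over maps X \<rightarrow> A_n^*.\<close>
definition satisfies :: "(nat list \<Rightarrow> 'c) \<Rightarrow> enat \<Rightarrow> identity \<Rightarrow> bool" where
  "satisfies P n uv \<longleftrightarrow>
     (\<forall>\<phi> :: nat \<Rightarrow> nat list. (\<forall>x. set (\<phi> x) \<subseteq> alph n) \<longrightarrow>
        P (subst \<phi> (fst uv)) = P (subst \<phi> (snd uv)))"

abbreviation stal_satisfies :: "enat \<Rightarrow> identity \<Rightarrow> bool" where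
  "stal_satisfies n uv \<equiv> satisfies P_stal n uv"

abbreviation taig_satisfies :: "enat \<Rightarrow> identity \<Rightarrow> bool" where
  "taig_satisfies n uv \<equiv> satisfies P_taig n uv"

definition deriv_step :: "identity set \<Rightarrow> nat list \<Rightarrow> nat list \<Rightarrow> bool" where
  "deriv_step \<Sigma> u v \<longleftrightarrow>
     (\<exists>a b p q (\<phi> :: nat \<Rightarrow> nat list). ((p, q) \<in> \<Sigma> \<or> (q, p) \<in> \<Sigma>) \<and>
        u = a @ subst \<phi> p @ b \<and> v = a @ subst \<phi> q @ b)"

definition derived :: "identity set \<Rightarrow> identity \<Rightarrow> bool" where
  "derived \<Sigma> uv \<longleftrightarrow> (deriv_step \<Sigma>)\<^sup>*\<^sup>* (fst uv) (snd uv)"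

definition finite_identity_basis :: "(identity \<Rightarrow> bool) \<Rightarrow> identity set \<Rightarrow> bool" where
  "finite_identity_basis sat \<Sigma> \<longleftrightarrow>
     finite \<Sigma> \<and> (\<forall>uv \<in> \<Sigma>. sat uv) \<and> (\<forall>uv. sat uv \<longrightarrow> derived \<Sigma> uv)"

text \<open>The identity xyx \<approx> yx^2 with x = variable 0, y = variable 1.\<close>
definition xyx_id :: identity where
  "xyx_id = ([0, 1, 0], [1, 0, 0])"

end

theory Submission
  imports Defs "HOL-Library.Multiset"
begin

abbreviation CC :: "nat list \<Rightarrow> nat list \<Rightarrow> bool" where
  "CC u v \<equiv> mset u = mset v \<and> remdups u = remdups v"

section \<open>Substitution preserves CC\<close>

lemma mset_subst: "mset (subst \<phi> u) = sum_list (map (mset \<circ> \<phi>) u)"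
  by (induction u) (auto simp: subst_def)

lemma sum_list_mset_eq: "mset u = mset v \<Longrightarrow> sum_list (map (f :: _ \<Rightarrow> _ :: comm_monoid_add) u) = sum_list (map f v)"
proof -
  assume m: "mset u = mset v"
  have "sum_list (map f u) = sum_mset (image_mset f (mset u))"
    by (simp only: sum_mset_sum_list[symmetric] mset_map)
  also have "\<dots> = sum_list (map f v)" unfolding m
    by (simp only: sum_mset_sum_list[symmetric] mset_map)
  finally show ?thesis .
qed

lemma remdups_app_cong:
  "remdups ys = remdups ys' \<Longrightarrow> set ys = set ys' \<Longrightarrow> remdups (xs @ ys) = remdups (xs @ ys')"
  by (induction xs) auto

lemma set_subst: "set (subst \<phi> u) = (\<Union>x\<in>set u. set (\<phi> x))"
  by (auto simp: subst_def)

lemma remdups_subst: "remdups (subst \<phi> u) = remdups (subst \<phi> (remdups u))"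
proof (induction u)
  case Nil
  then show ?case by (simp add: subst_def)
next
  case (Cons x u)
  show ?case
  proof (cases "x \<in> set u")
    case True
    have "set (\<phi> x) \<subseteq> set (subst \<phi> u)" using True by (auto simp: set_subst)
    then have "remdups (subst \<phi> (x # u)) = remdups (subst \<phi> u)"
      by (simp add: subst_def remdups_append)
    then show ?thesis using True Cons by simp
  next
    case False
    have "remdups (\<phi> x @ subst \<phi> u) = remdups (\<phi> x @ subst \<phi> (remdups u))"
      by (rule remdups_app_cong) (use Cons in \<open>auto simp: set_subst\<close>)
    then show ?thesis using False by (simp add: subst_def)
  qed
qed

lemma CC_subst: "CC u v \<Longrightarrow> CC (subst \<phi> u) (subst \<phi> v)"
proof -
  assume c: "CC u v"
  have "mset (subst \<phi> u) = mset (subst \<phi> v)" unfolding mset_subst using c by (intro sum_list_mset_eq) simp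
  moreover have "remdups (subst \<phi> u) = remdups (subst \<phi> v)" using c remdups_subst by metis
  ultimately show ?thesis by simp
qed

section \<open>Derivations\<close>

abbreviation D :: "nat list \<Rightarrow> nat list \<Rightarrow> bool" where
  "D \<equiv> (deriv_step {xyx_id})\<^sup>*\<^sup>*"

lemma step_basic: "deriv_step {xyx_id} (a @ [x] @ w @ [x] @ b) (a @ w @ [x,x] @ b)"
  unfolding deriv_step_def
  apply (rule exI[of _ a], rule exI[of _ b], rule exI[of _ "[0,1,0]"], rule exI[of _ "[1,0,0]"])
  apply (rule exI[of _ "\<lambda>i. if i = 0 then [x] else w"])
  by (simp add: subst_def xyx_id_def)

lemma step_cong: "deriv_step S u v \<Longrightarrow> deriv_step S (a@u@b) (a@v@b)"
  unfolding deriv_step_def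
  by (elim exE conjE, rule_tac x="a@aa" in exI, rule_tac x="ba@b" in exI) auto

lemma D_cong: "D u v \<Longrightarrow> D (a@u@b) (a@v@b)"
proof (induction rule: rtranclp_induct)
  case base then show ?case by simp
next
  case (step y z)
  then show ?case using step_cong by (metis rtranclp.rtrancl_into_rtrancl)
qed

lemma step_sym: "deriv_step S u v \<Longrightarrow> deriv_step S v u"
  unfolding deriv_step_def by blast

lemma D_sym: "D u v \<Longrightarrow> D v u"
proof (induction rule: rtranclp_induct)
  case base then show ?case by simp
next
  case (step y z)
  then show ?case using step_sym by (metis converse_rtranclp_into_rtranclp)
qed

lemma move:
  "D (u @ replicate (Suc k) x) (filter (\<lambda>z. z \<noteq> x) u @ replicate (Suc k + count_list u x) x)"
proof (induction "length u" arbitrary: u k rule: less_induct)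
  case less
  show ?case
  proof (cases "x \<in> set u")
    case False
    then have "filter (\<lambda>z. z \<noteq> x) u = u" by (auto simp: filter_id_conv)
    moreover have "count_list u x = 0" using False by (simp add: count_list_0_iff)
    ultimately show ?thesis by simp
  next
    case True
    then obtain a w where u: "u = a @ x # w" and xw: "x \<notin> set w"
      using split_list_last by metis
    have s: "deriv_step {xyx_id} (a @ [x] @ w @ [x] @ replicate k x) (a @ w @ [x,x] @ replicate k x)"
      by (rule step_basic)
    have e1: "u @ replicate (Suc k) x = a @ [x] @ w @ [x] @ replicate k x" using u by simp
    have e2: "a @ w @ [x,x] @ replicate k x = (a @ w) @ replicate (Suc (Suc k)) x" by simp
    have "length (a @ w) < length u" using u by simp
    then have ih: "D ((a @ w) @ replicate (Suc (Suc k)) x)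
       (filter (\<lambda>z. z \<noteq> x) (a @ w) @ replicate (Suc (Suc k) + count_list (a @ w) x) x)"
      using less by blast
    have f: "filter (\<lambda>z. z \<noteq> x) (a @ w) = filter (\<lambda>z. z \<noteq> x) u" using u by simp
    have c: "Suc (Suc k) + count_list (a @ w) x = Suc k + count_list u x" using u by simp
    show ?thesis using s ih e1 e2 f c
      by (metis converse_rtranclp_into_rtranclp)
  qed
qed

definition canon :: "nat list \<Rightarrow> nat list" where
  "canon u = concat (map (\<lambda>x. replicate (count_list u x) x) (remdups u))"

lemma remdups_snoc: "remdups (xs @ [x]) = remdups (filter (\<lambda>z. z \<noteq> x) xs) @ [x]"
  by (induction xs) auto

lemma count_filter_ne: "y \<noteq> x \<Longrightarrow> count_list (filter (\<lambda>z. z \<noteq> x) u) y = count_list u y"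
  by (induction u) auto

lemma canon_snoc:
  "canon (u @ [x]) = canon (filter (\<lambda>z. z \<noteq> x) u) @ replicate (Suc (count_list u x)) x"
proof -
  let ?r = "remdups (filter (\<lambda>z. z \<noteq> x) u)"
  have eq: "map (\<lambda>y. replicate (count_list (u @ [x]) y) y) ?r
      = map (\<lambda>y. replicate (count_list (filter (\<lambda>z. z \<noteq> x) u) y) y) ?r"
    by (rule map_cong) (auto simp: count_filter_ne)
  have c: "count_list (u @ [x]) x = Suc (count_list u x)" by simp
  have "canon (u @ [x]) = concat (map (\<lambda>y. replicate (count_list (u @ [x]) y) y) ?r)
        @ replicate (count_list (u @ [x]) x) x"
    by (simp only: canon_def remdups_snoc map_append concat_append list.map concat.simps append_Nil2)
  also have "\<dots> = canon (filter (\<lambda>z. z \<noteq> x) u) @ replicate (Suc (count_list u x)) x"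
    unfolding eq c canon_def by (rule refl)
  finally show ?thesis .
qed

lemma D_canon: "D u (canon u)"
proof (induction "length u" arbitrary: u rule: less_induct)
  case less
  show ?case
  proof (cases u rule: rev_exhaust)
    case Nil then show ?thesis by (simp add: canon_def)
  next
    case (snoc u' x)
    have m: "D (u' @ replicate (Suc 0) x) (filter (\<lambda>z. z \<noteq> x) u' @ replicate (Suc 0 + count_list u' x) x)"
      by (rule move)
    have "length (filter (\<lambda>z. z \<noteq> x) u') < length u" using snoc
      by (simp add: le_imp_less_Suc)
    then have "D (filter (\<lambda>z. z \<noteq> x) u') (canon (filter (\<lambda>z. z \<noteq> x) u'))" using less by blast
    then have "D ([] @ filter (\<lambda>z. z \<noteq> x) u' @ replicate (Suc (count_list u' x)) x)
                 ([] @ canon (filter (\<lambda>z. z \<noteq> x) u') @ replicate (Suc (count_list u' x)) x)"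
      by (rule D_cong)
    then show ?thesis using m snoc canon_snoc by (simp add: rtranclp_trans)
  qed
qed

lemma count_fun_eq: "mset u = mset v \<Longrightarrow> count_list u = count_list v"
proof (rule ext)
  fix x assume "mset u = mset v"
  then have "count (mset u) x = count (mset v) x" by simp
  then show "count_list u x = count_list v x" by (simp add: count_mset)
qed

lemma CC_canon: "CC u v \<Longrightarrow> canon u = canon v"
proof -
  assume c: "CC u v"
  then have "count_list u = count_list v" by (intro count_fun_eq) simp
  then show ?thesis unfolding canon_def using c by simp
qed

lemma CC_derived: "CC u v \<Longrightarrow> derived {xyx_id} (u, v)"
proof -
  assume c: "CC u v"
  have "D u (canon u)" by (rule D_canon)
  moreover have "D (canon v) v" by (rule D_sym, rule D_canon)
  ultimately have "D u v" using CC_canon[OF c] by (simp add: rtranclp_trans)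
  then show ?thesis unfolding derived_def by simp
qed


section \<open>Stalactic formula\<close>

lemma P_stal_formula:
  "P_stal w = map (\<lambda>x. replicate (count_list w x) x) (remdups w)"
proof (induction w)
  case Nil then show ?case by (simp add: P_stal_def)
next
  case (Cons a w)
  have P: "P_stal (a # w) = stal_ins a (P_stal w)" by (simp add: P_stal_def)
  show ?case
  proof (cases "a \<in> set w")
    case True
    have cpos: "count_list w a \<noteq> 0" using True by (simp add: count_list_0_iff)
    have inn: "a \<in> set (concat (map (\<lambda>x. replicate (count_list w x) x) (remdups w)))"
      using True cpos by auto
    have "map (\<lambda>c. if a \<in> set c then c @ [a] else c) (map (\<lambda>x. replicate (count_list w x) x) (remdups w))
        = map (\<lambda>x. replicate (count_list (a # w) x) x) (remdups w)"
    proof -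
      { fix x assume x: "x \<in> set w"
        then have "count_list w x \<noteq> 0" by (simp add: count_list_0_iff)
        then have "(if a \<in> set (replicate (count_list w x) x) then replicate (count_list w x) x @ [a]
               else replicate (count_list w x) x) = replicate (count_list (a # w) x) x"
          by (auto simp: replicate_append_same) }
      then show ?thesis by auto
    qed
    then show ?thesis using P Cons True inn by (simp add: stal_ins_def)
  next
    case False
    have nin: "a \<notin> set (concat (map (\<lambda>x. replicate (count_list w x) x) (remdups w)))"
      using False by auto
    have "map (\<lambda>x. replicate (count_list w x) x) (remdups w)
        = map (\<lambda>x. replicate (count_list (a # w) x) x) (remdups w)"
      using False by (auto intro!: map_cong)
    moreover have "count_list w a = 0" using False by (simp add: count_list_0_iff)
    ultimately show ?thesis using P Cons False nin by (simp add: stal_ins_def)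
  qed
qed

lemma stal_CC: "CC u v \<Longrightarrow> P_stal u = P_stal v"
proof -
  assume c: "CC u v"
  then have "count_list u = count_list v" by (intro count_fun_eq) simp
  then show ?thesis unfolding P_stal_formula using c by simp
qed

lemma last_remdups: "xs \<noteq> [] \<Longrightarrow> last (remdups xs) = last xs"
  by (induction xs) auto

lemma stal_rep: "P_stal (replicate k (1::nat)) = (if k = 0 then [] else [replicate k 1])"
  by (induction k) (auto simp: P_stal_def stal_ins_def replicate_append_same)

lemma stal_last: "w \<noteq> [] \<Longrightarrow> hd (last (P_stal w)) = last w"
proof -
  assume w: "w \<noteq> []"
  then have r: "remdups w \<noteq> []" by simp
  have "last w \<in> set w" using w by simp
  then have "count_list w (last w) \<noteq> 0" by (simp add: count_list_0_iff)
  then show ?thesis unfolding P_stal_formula by (simp add: last_map[OF r] last_remdups[OF w])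
qed

section \<open>Taiga formula\<close>

fun setm :: "(nat \<Rightarrow> nat) \<Rightarrow> bstm \<Rightarrow> bstm" where
  "setm c Leaf = Leaf"
| "setm c (Node l x m r) = Node (setm c l) x (c x) (setm c r)"

fun labels :: "bstm \<Rightarrow> nat set" where
  "labels Leaf = {}"
| "labels (Node l x m r) = labels l \<union> {x} \<union> labels r"

fun bst :: "bstm \<Rightarrow> bool" where
  "bst Leaf = True"
| "bst (Node l x m r) = (bst l \<and> bst r \<and> (\<forall>y\<in>labels l. y < x) \<and> (\<forall>y\<in>labels r. x < y))"

fun root :: "bstm \<Rightarrow> nat" where
  "root Leaf = 0"
| "root (Node l x m r) = x"

lemma labels_ins: "labels (taig_ins a t) = insert a (labels t)"
  by (induction t) auto

lemma bst_ins: "bst t \<Longrightarrow> bst (taig_ins a t)"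
  by (induction t) (auto simp: labels_ins)

lemma setm_cong: "(\<forall>y\<in>labels t. c y = c' y) \<Longrightarrow> setm c t = setm c' t"
  by (induction t) auto

lemma ins_old: "bst t \<Longrightarrow> a \<in> labels t \<Longrightarrow> taig_ins a (setm c t) = setm (c(a := Suc (c a))) t"
proof (induction t)
  case Leaf then show ?case by simp
next
  case (Node l x m r)
  show ?case
  proof (cases "a < x")
    case True
    then have "a \<in> labels l" "a \<notin> labels r" using Node.prems by force+
    then show ?thesis using Node True by (auto intro!: setm_cong)
  next
    case False
    show ?thesis
    proof (cases "x < a")
      case True
      then have "a \<in> labels r" "a \<notin> labels l" using Node.prems False by force+
      then show ?thesis using Node True False by (auto intro!: setm_cong)
    next
      case False2: False
      then have "a = x" using False by simp
      then have "a \<notin> labels l" "a \<notin> labels r" using Node.prems by auto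
      then show ?thesis using \<open>a = x\<close> by (auto intro!: setm_cong)
    qed
  qed
qed

lemma ins_new: "a \<notin> labels t \<Longrightarrow> taig_ins a (setm c t) = setm (c(a := 1)) (taig_ins a t)"
proof (induction t)
  case Leaf then show ?case by simp
next
  case (Node l x m r)
  then have ax: "a \<noteq> x" "a \<notin> labels l" "a \<notin> labels r" by auto
  then show ?case using Node by (auto intro!: setm_cong)
qed

lemma shape_props: "labels (foldr taig_ins xs Leaf) = set xs \<and> bst (foldr taig_ins xs Leaf)"
  by (induction xs) (auto simp: labels_ins bst_ins)

lemma P_taig_formula:
  "P_taig w = setm (count_list w) (foldr taig_ins (remdups w) Leaf)"
proof (induction w)
  case Nil then show ?case by (simp add: P_taig_def)
next
  case (Cons a w)
  let ?T = "foldr taig_ins (remdups w) Leaf"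
  have P: "P_taig (a # w) = taig_ins a (P_taig w)" by (simp add: P_taig_def)
  have lab: "labels ?T = set w" and b: "bst ?T" using shape_props[of "remdups w"] by auto
  show ?case
  proof (cases "a \<in> set w")
    case True
    have "taig_ins a (setm (count_list w) ?T) = setm ((count_list w)(a := Suc (count_list w a))) ?T"
      using ins_old[OF b] True lab by simp
    moreover have "(count_list w)(a := Suc (count_list w a)) = count_list (a # w)" by auto
    moreover have "remdups (a # w) = remdups w" using True by simp
    ultimately show ?thesis using P Cons.IH by metis
  next
    case False
    have "taig_ins a (setm (count_list w) ?T) = setm ((count_list w)(a := 1)) (taig_ins a ?T)"
      using ins_new False lab by simp
    moreover have "(count_list w)(a := 1) = count_list (a # w)" using False
      by (auto simp: count_list_0_iff)
    moreover have "remdups (a # w) = a # remdups w" using False by simp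
    ultimately show ?thesis using P Cons.IH by (metis foldr.simps(2) o_apply)
  qed
qed

lemma taig_CC: "CC u v \<Longrightarrow> P_taig u = P_taig v"
proof -
  assume a: "CC u v"
  then have "count_list u = count_list v" by (intro count_fun_eq) simp
  then show ?thesis unfolding P_taig_formula using a by simp
qed

lemma taig_rep: "P_taig (replicate k (1::nat)) = (if k = 0 then Leaf else Node Leaf 1 k Leaf)"
  by (induction k) (auto simp: P_taig_def)

lemma root_ins: "t \<noteq> Leaf \<Longrightarrow> root (taig_ins a t) = root t"
  by (cases t) auto

lemma ins_nonleaf: "taig_ins a t \<noteq> Leaf"
  by (cases t) auto

lemma taig_last: "w \<noteq> [] \<Longrightarrow> root (P_taig w) = last w"
proof (induction w)
  case Nil then show ?case by simp
next
  case (Cons a w)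
  show ?case
  proof (cases "w = []")
    case True then show ?thesis by (simp add: P_taig_def)
  next
    case False
    have "P_taig w \<noteq> Leaf" using False by (cases w) (auto simp: P_taig_def ins_nonleaf)
    then show ?thesis using Cons False root_ins by (simp add: P_taig_def)
  qed
qed


lemma subst_single: "subst (\<lambda>z. if z = x then [1] else []) u = replicate (count_list u x) (1::nat)"
  by (induction u) (auto simp: subst_def)

lemma subst_pair: "x \<noteq> y \<Longrightarrow> subst (\<lambda>z. if z = x then [1] else if z = y then [2] else []) u
    = map (\<lambda>z. if z = x then 1 else 2::nat) (filter (\<lambda>z. z = x \<or> z = y) u)"
  by (induction u) (auto simp: subst_def)

lemma filter_single: "distinct xs \<Longrightarrow> b \<in> set xs \<Longrightarrow> filter (\<lambda>z. z = b) xs = [b]"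
  by (induction xs) (auto simp: filter_empty_conv)

lemma filter_two: "distinct xs \<Longrightarrow> b \<in> set xs \<Longrightarrow> a \<notin> set xs \<Longrightarrow> filter (\<lambda>z. z = a \<or> z = b) xs = [b]"
proof -
  assume d: "distinct xs" and b: "b \<in> set xs" and a: "a \<notin> set xs"
  have "filter (\<lambda>z. z = a \<or> z = b) xs = filter (\<lambda>z. z = b) xs"
    by (rule filter_cong) (use a in auto)
  then show ?thesis using filter_single[OF d b] by simp
qed

lemma Ldist:
  "distinct xs \<Longrightarrow> distinct ys \<Longrightarrow> set xs = set ys \<Longrightarrow>
   (\<forall>x y. x \<noteq> y \<longrightarrow> filter (\<lambda>z. z = x \<or> z = y) xs \<noteq> [] \<longrightarrow>
      last (filter (\<lambda>z. z = x \<or> z = y) xs) = last (filter (\<lambda>z. z = x \<or> z = y) ys)) \<Longrightarrow> xs = ys"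
proof (induction xs arbitrary: ys)
  case Nil then show ?case by simp
next
  case (Cons a xs)
  then obtain b ys' where ys: "ys = b # ys'" by (cases ys) auto
  have ab: "a = b"
  proof (rule ccontr)
    assume ne: "a \<noteq> b"
    have bx: "b \<in> set xs" "a \<notin> set xs" using Cons.prems ys ne by auto
    have ay: "a \<in> set ys'" "b \<notin> set ys'" using Cons.prems ys ne by auto
    have f1: "filter (\<lambda>z. z = a \<or> z = b) (a # xs) = [a, b]"
      using filter_two[of xs b a] bx Cons.prems by simp
    have f2: "filter (\<lambda>z. z = a \<or> z = b) (b # ys') = [b, a]"
      using filter_two[of ys' a b] ay Cons.prems ys by (simp add: disj_commute)
    have "last (filter (\<lambda>z. z = a \<or> z = b) (a # xs)) = last (filter (\<lambda>z. z = a \<or> z = b) ys)"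
      using Cons.prems(4)[rule_format, of a b] ne f1 by simp
    then show False using f1 f2 ys ne by simp
  qed
  have d1: "distinct xs" and d2: "distinct ys'" using Cons.prems ys by auto
  have se: "set xs = set ys'" using Cons.prems ys ab by auto
  have cond: "\<forall>x y. x \<noteq> y \<longrightarrow> filter (\<lambda>z. z = x \<or> z = y) xs \<noteq> [] \<longrightarrow>
      last (filter (\<lambda>z. z = x \<or> z = y) xs) = last (filter (\<lambda>z. z = x \<or> z = y) ys')"
  proof (intro allI impI)
    fix x y assume xy: "x \<noteq> y" and ne: "filter (\<lambda>z. z = x \<or> z = y) xs \<noteq> []"
    have ne2: "filter (\<lambda>z. z = x \<or> z = y) ys' \<noteq> []" using ne se by (auto simp: filter_empty_conv)
    have ne3: "filter (\<lambda>z. z = x \<or> z = y) (a # xs) \<noteq> []" using ne by auto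
    have "last (filter (\<lambda>z. z = x \<or> z = y) (a # xs)) = last (filter (\<lambda>z. z = x \<or> z = y) (a # ys'))"
      using Cons.prems(4)[rule_format, OF xy ne3] ys ab by simp
    then show "last (filter (\<lambda>z. z = x \<or> z = y) xs) = last (filter (\<lambda>z. z = x \<or> z = y) ys')"
      using ne ne2 by (auto split: if_splits)
  qed
  have "xs = ys'" using Cons.IH[OF d1 d2 se cond] .
  then show ?case using ys ab by simp
qed

lemma set_eq_count: "\<forall>x. count_list u x = count_list v x \<Longrightarrow> set u = set v"
proof -
  assume c: "\<forall>x. count_list u x = count_list v x"
  have "x \<in> set u \<longleftrightarrow> x \<in> set v" for x
    using c[rule_format, of x] count_list_0_iff[of u x] count_list_0_iff[of v x] by auto
  then show ?thesis by auto
qed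

lemma L:
  assumes c: "\<forall>x. count_list u x = count_list v x"
  and l: "\<forall>x y. x \<noteq> y \<longrightarrow> filter (\<lambda>z. z = x \<or> z = y) u \<noteq> [] \<longrightarrow>
      last (filter (\<lambda>z. z = x \<or> z = y) u) = last (filter (\<lambda>z. z = x \<or> z = y) v)"
  shows "remdups u = remdups v"
proof -
  have se: "set u = set v" using c by (rule set_eq_count)
  show ?thesis
  proof (rule Ldist)
    show "distinct (remdups u)" "distinct (remdups v)" by auto
    show "set (remdups u) = set (remdups v)" using se by simp
    show "\<forall>x y. x \<noteq> y \<longrightarrow> filter (\<lambda>z. z = x \<or> z = y) (remdups u) \<noteq> [] \<longrightarrow>
      last (filter (\<lambda>z. z = x \<or> z = y) (remdups u)) = last (filter (\<lambda>z. z = x \<or> z = y) (remdups v))"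
    proof (intro allI impI)
      fix x y assume xy: "x \<noteq> y" and ne: "filter (\<lambda>z. z = x \<or> z = y) (remdups u) \<noteq> []"
      have "filter (\<lambda>z. z = x \<or> z = y) u \<noteq> []" using ne by (auto simp: filter_empty_conv)
      then show "last (filter (\<lambda>z. z = x \<or> z = y) (remdups u)) = last (filter (\<lambda>z. z = x \<or> z = y) (remdups v))"
        using l xy by (simp add: remdups_filter_last)
    qed
  qed
qed

lemma alph12: "2 \<le> n \<Longrightarrow> (1::nat) \<in> alph n \<and> (2::nat) \<in> alph n"
proof -
  assume n: "2 \<le> n"
  have e2: "enat 2 \<le> n" using n by (simp add: numeral_eq_enat)
  have "enat 1 \<le> enat 2" by simp
  then have e1: "enat 1 \<le> n" using e2 by (rule order_trans)
  show ?thesis unfolding alph_def using e1 e2 by simp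
qed

lemma sat_CC:
  fixes P :: "nat list \<Rightarrow> 'c"
  assumes n: "2 \<le> n" and sat: "satisfies P n (u, v)"
    and rep: "\<And>k k'. P (replicate k 1) = P (replicate k' 1) \<Longrightarrow> k = k'"
    and lst: "\<And>w w'. w \<noteq> [] \<Longrightarrow> w' \<noteq> [] \<Longrightarrow> P w = P w' \<Longrightarrow> last w = last w'"
  shows "CC u v"
proof -
  have a12: "(1::nat) \<in> alph n" "(2::nat) \<in> alph n" using alph12[OF n] by auto
  have cnt: "\<forall>x. count_list u x = count_list v x"
  proof
    fix x :: nat
    let ?\<phi> = "\<lambda>z. if z = x then [1] else ([]::nat list)"
    have "\<forall>z. set (?\<phi> z) \<subseteq> alph n" using a12 by auto
    then have "P (subst ?\<phi> u) = P (subst ?\<phi> v)" using sat unfolding satisfies_def by auto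
    then show "count_list u x = count_list v x" unfolding subst_single by (rule rep)
  qed
  have "mset u = mset v" using cnt by (simp add: multiset_eq_iff count_mset)
  moreover have "remdups u = remdups v"
  proof (rule L[OF cnt], intro allI impI)
    fix x y :: nat assume xy: "x \<noteq> y" and ne: "filter (\<lambda>z. z = x \<or> z = y) u \<noteq> []"
    let ?\<phi> = "\<lambda>z. if z = x then [1] else if z = y then [2] else ([]::nat list)"
    let ?g = "\<lambda>z. if z = x then 1 else 2::nat"
    have "\<forall>z. set (?\<phi> z) \<subseteq> alph n" using a12 by auto
    then have "P (subst ?\<phi> u) = P (subst ?\<phi> v)" using sat unfolding satisfies_def by auto
    then have e: "P (map ?g (filter (\<lambda>z. z = x \<or> z = y) u)) = P (map ?g (filter (\<lambda>z. z = x \<or> z = y) v))"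
      by (simp only: subst_pair[OF xy])
    have se: "set u = set v" using cnt by (rule set_eq_count)
    have ne2: "filter (\<lambda>z. z = x \<or> z = y) v \<noteq> []" using ne se by (auto simp: filter_empty_conv)
    have "last (map ?g (filter (\<lambda>z. z = x \<or> z = y) u)) = last (map ?g (filter (\<lambda>z. z = x \<or> z = y) v))"
      by (rule lst[OF _ _ e]) (use ne ne2 in simp_all)
    then have g: "?g (last (filter (\<lambda>z. z = x \<or> z = y) u)) = ?g (last (filter (\<lambda>z. z = x \<or> z = y) v))"
      using ne ne2 by (simp add: last_map)
    have i1: "last (filter (\<lambda>z. z = x \<or> z = y) u) \<in> {x, y}"
      using last_in_set[OF ne] by auto
    have i2: "last (filter (\<lambda>z. z = x \<or> z = y) v) \<in> {x, y}"
      using last_in_set[OF ne2] by auto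
    show "last (filter (\<lambda>z. z = x \<or> z = y) u) = last (filter (\<lambda>z. z = x \<or> z = y) v)"
      using g i1 i2 xy by (auto split: if_splits)
  qed
  ultimately show ?thesis by simp
qed

lemma CC_sat:
  assumes "\<And>u v. CC u v \<Longrightarrow> P u = P v" and "CC u v"
  shows "satisfies P n (u, v)"
  unfolding satisfies_def
proof (intro allI impI)
  fix \<phi> :: "nat \<Rightarrow> nat list"
  have "P (subst \<phi> u) = P (subst \<phi> v)" by (rule assms(1)[OF CC_subst[OF assms(2)]])
  then show "P (subst \<phi> (fst (u, v))) = P (subst \<phi> (snd (u, v)))" by simp
qed

lemma stal_rep_inj: "P_stal (replicate k 1) = P_stal (replicate k' 1) \<Longrightarrow> k = k'"
  unfolding stal_rep by (cases "k = 0"; cases "k' = 0") simp_all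

lemma stal_last_eq: "w \<noteq> [] \<Longrightarrow> w' \<noteq> [] \<Longrightarrow> P_stal w = P_stal w' \<Longrightarrow> last w = last w'"
  by (metis stal_last)

lemma taig_rep_inj: "P_taig (replicate k 1) = P_taig (replicate k' 1) \<Longrightarrow> k = k'"
  unfolding taig_rep by (cases "k = 0"; cases "k' = 0") simp_all

lemma taig_last_eq: "w \<noteq> [] \<Longrightarrow> w' \<noteq> [] \<Longrightarrow> P_taig w = P_taig w' \<Longrightarrow> last w = last w'"
  by (metis taig_last)

lemma stal_iff: "2 \<le> n \<Longrightarrow> stal_satisfies n uv \<longleftrightarrow> CC (fst uv) (snd uv)"
proof -
  assume n: "2 \<le> n"
  obtain u v where uv: "uv = (u, v)" by (cases uv)
  have "CC u v" if s: "stal_satisfies n (u, v)"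
    by (rule sat_CC[OF n s stal_rep_inj stal_last_eq])
  moreover have "stal_satisfies n (u, v)" if c: "CC u v"
    by (rule CC_sat[of P_stal, OF stal_CC c])
  ultimately have "stal_satisfies n (u, v) \<longleftrightarrow> CC u v" by blast
  then show ?thesis unfolding uv fst_conv snd_conv .
qed

lemma taig_iff: "2 \<le> n \<Longrightarrow> taig_satisfies n uv \<longleftrightarrow> CC (fst uv) (snd uv)"
proof -
  assume n: "2 \<le> n"
  obtain u v where uv: "uv = (u, v)" by (cases uv)
  have "CC u v" if s: "taig_satisfies n (u, v)"
    by (rule sat_CC[OF n s taig_rep_inj taig_last_eq])
  moreover have "taig_satisfies n (u, v)" if c: "CC u v"
    by (rule CC_sat[of P_taig, OF taig_CC c])
  ultimately have "taig_satisfies n (u, v) \<longleftrightarrow> CC u v" by blast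
  then show ?thesis unfolding uv fst_conv snd_conv .
qed

lemma CC_xyx: "CC (fst xyx_id) (snd xyx_id)"
  by (simp add: xyx_id_def)

lemma basis:
  assumes "\<And>uv. sat uv \<longleftrightarrow> CC (fst uv) (snd uv)"
  shows "finite_identity_basis sat {xyx_id}"
  unfolding finite_identity_basis_def
proof (intro conjI ballI allI impI)
  show "finite {xyx_id}" by simp
next
  fix uv assume "uv \<in> {xyx_id}"
  then show "sat uv" using assms CC_xyx by simp
next
  fix uv assume "sat uv"
  then have "CC (fst uv) (snd uv)" using assms by simp
  then have "derived {xyx_id} (fst uv, snd uv)" by (rule CC_derived)
  then show "derived {xyx_id} uv" by simp
qed

theorem theorem4p2:
  fixes n :: enat
  assumes "2 \<le> n"
  shows "finite_identity_basis (stal_satisfies n) {xyx_id}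
       \<and> finite_identity_basis (taig_satisfies n) {xyx_id}
       \<and> (\<forall>m :: enat. 2 \<le> m \<longrightarrow>
            (\<forall>uv. (stal_satisfies n uv \<longleftrightarrow> stal_satisfies m uv)
                \<and> (stal_satisfies n uv \<longleftrightarrow> taig_satisfies m uv)))"
proof (intro conjI allI impI)
  show "finite_identity_basis (stal_satisfies n) {xyx_id}" by (rule basis, rule stal_iff[OF assms])
  show "finite_identity_basis (taig_satisfies n) {xyx_id}" by (rule basis, rule taig_iff[OF assms])
  fix m :: enat and uv assume m: "2 \<le> m"
  show "stal_satisfies n uv = stal_satisfies m uv" using stal_iff[OF assms] stal_iff[OF m] by simp
  show "stal_satisfies n uv = taig_satisfies m uv" using stal_iff[OF assms] taig_iff[OF m] by simp
qed

end
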